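(* Let $D\geq 2$ and $2\leq r\leq D^2$. Then the set of primitive completely positive maps on $\mathcal{M}_D(\mathbb{C})$ of Kraus rank $r$ is non-empty.
   Context: A CP map on $\mathcal{M}_D(\mathbb{C})$ has the form $\mathcal{T}(X)=\sum_iA_iXA_i^\dagger$; its Kraus rank is the minimal number of such $A_i$, equal to the rank of the Choi matrix $\omega(\mathcal{T})=(\mathcal{T}\otimes\mathrm{id})(|\varphi\rangle\langle\varphi|)$, $\varphi=\sum_i|ii\rangle$ (so it is at most $D^2$). $\mathcal{T}$ is primitive iff there exists $n\in\mathbb{N}$ with $\mathrm{rank}\,\omega(\mathcal{T}^n)=D^2$. *)

theory Defs
  imports "Jordan_Normal_Form.DL_Rank" "Jordan_Normal_Form.Schur_Decomposition"
begin

text \<open>A linear map on M_D(C) is modelled as a function complex mat => complex mat;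
  only its values on carrier_mat D D matter.\<close>

definition kraus_sum :: "nat \<Rightarrow> complex mat list \<Rightarrow> complex mat \<Rightarrow> complex mat" where
  "kraus_sum D As X = foldr (\<lambda>A S. A * X * mat_adjoint A + S) As (0\<^sub>m D D)"

definition is_kraus_rep :: "nat \<Rightarrow> (complex mat \<Rightarrow> complex mat) \<Rightarrow> complex mat list \<Rightarrow> bool" where
  "is_kraus_rep D T As \<longleftrightarrow> set As \<subseteq> carrier_mat D D \<and>
     (\<forall>X \<in> carrier_mat D D. T X = kraus_sum D As X)"

definition cp_map :: "nat \<Rightarrow> (complex mat \<Rightarrow> complex mat) \<Rightarrow> bool" where
  "cp_map D T \<longleftrightarrow> (\<exists>As. is_kraus_rep D T As)"

definition kraus_rank :: "nat \<Rightarrow> (complex mat \<Rightarrow> complex mat) \<Rightarrow> nat" where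
  "kraus_rank D T = (LEAST k. \<exists>As. is_kraus_rep D T As \<and> length As = k)"

definition mat_unit :: "nat \<Rightarrow> nat \<Rightarrow> nat \<Rightarrow> complex mat" where
  "mat_unit D i j = mat D D (\<lambda>(a,b). if a = i \<and> b = j then 1 else 0)"

text \<open>Choi matrix (T \<otimes> id)(|phi><phi|), phi = sum_i |ii>, with tensor basis index
  |a> \<otimes> |i> |-> a * D + i, i.e. entry ((a,i),(b,j)) = T(|i><j|)_{a,b}.\<close>
definition choi :: "nat \<Rightarrow> (complex mat \<Rightarrow> complex mat) \<Rightarrow> complex mat" where
  "choi D T = mat (D*D) (D*D)
     (\<lambda>(p,q). T (mat_unit D (p mod D) (q mod D)) $$ (p div D, q div D))"

definition primitive :: "nat \<Rightarrow> (complex mat \<Rightarrow> complex mat) \<Rightarrow> bool" where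
  "primitive D T \<longleftrightarrow> (\<exists>n::nat. vec_space.rank (D*D) (choi D (T ^^ n)) = D^2)"

end

theory Submission
  imports Defs
begin

lemma adj_eq: assumes "A \<in> carrier_mat n m"
  shows "mat_adjoint A = mat m n (\<lambda>(i,j). conjugate (A $$ (j,i)))"
  using assms unfolding mat_adjoint_def
  by (intro eq_matI) (auto simp: mat_of_rows_def)

definition pr :: "nat \<Rightarrow> nat \<Rightarrow> nat" where "pr D a = (a + D - 1) mod D"

lemma pr_lt: "D > 0 \<Longrightarrow> pr D a < D" unfolding pr_def by simp

lemma h1: "(c::nat) < D \<Longrightarrow> Suc c mod D = (if Suc c = D then 0 else Suc c)" by auto
lemma h2: "(a::nat) < D \<Longrightarrow> (a + D - 1) mod D = (if a = 0 then D - 1 else a - 1)"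
proof (cases "a = 0")
  case False
  assume "a < D"
  then have eq: "a + D - 1 = (a - 1) + D" using False by simp
  have "(a - 1 + D) mod D = (a - 1) mod D" by (rule mod_add_self2)
  also have "\<dots> = a - 1" using \<open>a < D\<close> by simp
  finally show ?thesis unfolding eq using False by simp
qed simp
lemma pr_iff: assumes "D > 0" "(a::nat) < D" "c < D"
  shows "(a = Suc c mod D) \<longleftrightarrow> (c = pr D a)"
  unfolding pr_def h1[OF assms(3)] h2[OF assms(2)] using assms by auto

definition Sm :: "nat \<Rightarrow> complex mat" where
  "Sm D = mat D D (\<lambda>(a,b). if a = Suc b mod D then 1 else 0)"

lemma Sm_carrier[simp]: "Sm D \<in> carrier_mat D D" unfolding Sm_def by simp
lemma Sm_dims[simp]: "dim_row (Sm D) = D" "dim_col (Sm D) = D" unfolding Sm_def by simp_all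
lemma adj_dims[simp]: "dim_row (mat_adjoint A) = dim_col A" "dim_col (mat_adjoint A) = dim_row A"
  unfolding mat_adjoint_def by (simp_all add: mat_of_rows_def)
lemma unit_dims[simp]: "dim_row (mat_unit D i j) = D" "dim_col (mat_unit D i j) = D" unfolding mat_unit_def by simp_all

lemma sum_pick: assumes "(p::nat) < D"
  shows "(\<Sum>c\<in>{0..<D}. (if c = p then f c else 0)) = f p"
proof -
  have "p \<in> {0..<D}" using assms by simp
  then show ?thesis by (simp only: sum.delta[OF finite_atLeastLessThan]) auto
qed

lemma mult_entry: assumes "A \<in> carrier_mat n k" "B \<in> carrier_mat k m" "i < n" "j < m"
  shows "(A*B) $$ (i,j) = (\<Sum>c\<in>{0..<k}. A $$ (i,c) * B $$ (c,j))"
  using assms by (auto simp: scalar_prod_def intro!: sum.cong)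

lemma Sm_entry: assumes "D > 0" "a < D" "c < D"
  shows "Sm D $$ (a,c) = (if c = pr D a then 1 else 0)"
  using assms pr_iff[OF assms] unfolding Sm_def by simp

lemma Sm_mult: assumes "D > 0" "X \<in> carrier_mat D D"
  shows "Sm D * X = mat D D (\<lambda>(a,d). X $$ (pr D a, d))"
proof (rule eq_matI)
  fix a d assume ad: "a < dim_row (mat D D (\<lambda>(a,d). X $$ (pr D a, d)))" "d < dim_col (mat D D (\<lambda>(a,d). X $$ (pr D a, d)))"
  then have a: "a < D" and d: "d < D" by auto
  have "(Sm D * X) $$ (a,d) = (\<Sum>c\<in>{0..<D}. Sm D $$ (a,c) * X $$ (c,d))"
    by (rule mult_entry[OF Sm_carrier assms(2) a d])
  also have "\<dots> = (\<Sum>c\<in>{0..<D}. if c = pr D a then X $$ (c,d) else 0)"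
    by (rule sum.cong[OF refl]) (simp add: Sm_entry[OF assms(1) a])
  also have "\<dots> = X $$ (pr D a, d)" by (rule sum_pick[OF pr_lt[OF assms(1)]])
  finally show "(Sm D * X) $$ (a,d) = mat D D (\<lambda>(a,d). X $$ (pr D a, d)) $$ (a,d)" using a d by simp
qed (use assms in auto)

lemma adj_entry: assumes "A \<in> carrier_mat n m" "i < m" "j < n"
  shows "mat_adjoint A $$ (i,j) = conjugate (A $$ (j,i))"
  using assms by (simp add: adj_eq)

lemma adj_carrier: assumes "A \<in> carrier_mat n m" shows "mat_adjoint A \<in> carrier_mat m n"
  using assms by (simp add: adj_eq)

lemma Sm_conj: assumes "D > 0" "X \<in> carrier_mat D D"
  shows "Sm D * X * mat_adjoint (Sm D) = mat D D (\<lambda>(a,b). X $$ (pr D a, pr D b))"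
proof (rule eq_matI)
  fix a b assume "a < dim_row (mat D D (\<lambda>(a,b). X $$ (pr D a, pr D b)))" "b < dim_col (mat D D (\<lambda>(a,b). X $$ (pr D a, pr D b)))"
  then have a: "a < D" and b: "b < D" by auto
  have c1: "mat D D (\<lambda>(a,d). X $$ (pr D a, d)) \<in> carrier_mat D D" by simp
  have "(Sm D * X * mat_adjoint (Sm D)) $$ (a,b) = (\<Sum>d\<in>{0..<D}. mat D D (\<lambda>(a,d). X $$ (pr D a, d)) $$ (a,d) * mat_adjoint (Sm D) $$ (d,b))"
    unfolding Sm_mult[OF assms] by (rule mult_entry[OF c1 adj_carrier[OF Sm_carrier] a b])
  also have "\<dots> = (\<Sum>d\<in>{0..<D}. if d = pr D b then X $$ (pr D a, d) else 0)"
    by (rule sum.cong[OF refl]) (simp add: a adj_entry[OF Sm_carrier _ b] Sm_entry[OF assms(1) b])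
  also have "\<dots> = X $$ (pr D a, pr D b)" by (rule sum_pick[OF pr_lt[OF assms(1)]])
  finally show "(Sm D * X * mat_adjoint (Sm D)) $$ (a,b) = mat D D (\<lambda>(a,b). X $$ (pr D a, pr D b)) $$ (a,b)" using a b by simp
qed simp_all

lemma unit_carrier[simp]: "mat_unit D i j \<in> carrier_mat D D" unfolding mat_unit_def by simp

lemma unit_entry: "a < D \<Longrightarrow> b < D \<Longrightarrow> mat_unit D i j $$ (a,b) = (if a = i \<and> b = j then 1 else 0)"
  unfolding mat_unit_def by simp

lemma unit_conj: assumes "X \<in> carrier_mat D D" "i < D" "j < D"
  shows "mat_unit D i j * X * mat_adjoint (mat_unit D i j) = mat D D (\<lambda>(a,b). if a = i \<and> b = i then X $$ (j,j) else 0)"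
proof (rule eq_matI)
  fix a b assume "a < dim_row (mat D D (\<lambda>(a,b). if a = i \<and> b = i then X $$ (j,j) else 0))" "b < dim_col (mat D D (\<lambda>(a,b). if a = i \<and> b = i then X $$ (j,j) else 0))"
  then have a: "a < D" and b: "b < D" by auto
  have m1: "mat_unit D i j * X = mat D D (\<lambda>(a,d). if a = i then X $$ (j,d) else 0)"
  proof (rule eq_matI)
    fix a d assume "a < dim_row (mat D D (\<lambda>(a,d). if a = i then X $$ (j,d) else 0))" "d < dim_col (mat D D (\<lambda>(a,d). if a = i then X $$ (j,d) else 0))"
    then have a: "a < D" and d: "d < D" by auto
    have "(mat_unit D i j * X) $$ (a,d) = (\<Sum>c\<in>{0..<D}. mat_unit D i j $$ (a,c) * X $$ (c,d))"
      by (rule mult_entry[OF unit_carrier assms(1) a d])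
    also have "\<dots> = (\<Sum>c\<in>{0..<D}. if c = j then (if a = i then X $$ (c,d) else 0) else 0)"
      by (rule sum.cong[OF refl]) (simp add: unit_entry a)
    also have "\<dots> = (if a = i then X $$ (j,d) else 0)" by (rule sum_pick[OF assms(3)])
    finally show "(mat_unit D i j * X) $$ (a,d) = mat D D (\<lambda>(a,d). if a = i then X $$ (j,d) else 0) $$ (a,d)" using a d by simp
  qed (use assms in auto)
  have c1: "mat D D (\<lambda>(a,d). if a = i then X $$ (j,d) else 0) \<in> carrier_mat D D" by simp
  have "(mat_unit D i j * X * mat_adjoint (mat_unit D i j)) $$ (a,b) = (\<Sum>d\<in>{0..<D}. mat D D (\<lambda>(a,d). if a = i then X $$ (j,d) else 0) $$ (a,d) * mat_adjoint (mat_unit D i j) $$ (d,b))"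
    unfolding m1 by (rule mult_entry[OF c1 adj_carrier[OF unit_carrier] a b])
  also have "\<dots> = (\<Sum>d\<in>{0..<D}. if d = j then (if a = i \<and> b = i then X $$ (j,d) else 0) else 0)"
    by (rule sum.cong[OF refl]) (auto simp: a b adj_entry[OF unit_carrier] unit_entry)
  also have "\<dots> = (if a = i \<and> b = i then X $$ (j,j) else 0)" by (rule sum_pick[OF assms(3)])
  finally show "(mat_unit D i j * X * mat_adjoint (mat_unit D i j)) $$ (a,b) = mat D D (\<lambda>(a,b). if a = i \<and> b = i then X $$ (j,j) else 0) $$ (a,b)" using a b by simp
qed simp_all

definition gg :: "nat \<Rightarrow> nat \<Rightarrow> nat" where "gg D q = (if q < D then q else Suc q)"

definition Tf :: "nat \<Rightarrow> nat \<Rightarrow> complex mat \<Rightarrow> complex mat" where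
  "Tf D m X = mat D D (\<lambda>(a,b). X $$ (pr D a, pr D b) +
     (if a = b then (\<Sum>q\<in>{0..<m}. if gg D q div D = a then X $$ (gg D q mod D, gg D q mod D) else 0) else 0))"

definition Eq :: "nat \<Rightarrow> nat \<Rightarrow> complex mat" where
  "Eq D q = mat_unit D (gg D q div D) (gg D q mod D)"

definition Klist :: "nat \<Rightarrow> nat \<Rightarrow> complex mat list" where
  "Klist D m = Sm D # map (Eq D) [0..<m]"

lemma kraus_cons: "kraus_sum D (A#As) X = A * X * mat_adjoint A + kraus_sum D As X"
  unfolding kraus_sum_def by simp

lemma ks_carrier: "set As \<subseteq> carrier_mat D D \<Longrightarrow> X \<in> carrier_mat D D \<Longrightarrow> kraus_sum D As X \<in> carrier_mat D D"
proof (induction As)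
  case Nil then show ?case by (simp add: kraus_sum_def)
next
  case (Cons A As)
  then show ?case unfolding kraus_cons
    by (intro add_carrier_mat mult_carrier_mat adj_carrier) auto
qed

lemma ks_units: assumes "X \<in> carrier_mat D D" "D > 0" "\<forall>q\<in>set qs. gg D q < D*D"
  shows "kraus_sum D (map (Eq D) qs) X = mat D D (\<lambda>(a,b). if a = b then
     sum_list (map (\<lambda>q. if gg D q div D = a then X $$ (gg D q mod D, gg D q mod D) else 0) qs) else 0)"
  using assms(3)
proof (induction qs)
  case Nil then show ?case by (auto simp: kraus_sum_def intro!: eq_matI)
next
  case (Cons q qs)
  have lt: "gg D q div D < D" "gg D q mod D < D" using Cons.prems assms(2)
    by (auto simp: less_mult_imp_div_less)
  have IH: "kraus_sum D (map (Eq D) qs) X = mat D D (\<lambda>(a,b). if a = b then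
     sum_list (map (\<lambda>q. if gg D q div D = a then X $$ (gg D q mod D, gg D q mod D) else 0) qs) else 0)"
    using Cons by simp
  show ?case unfolding list.map kraus_cons IH unfolding Eq_def unit_conj[OF assms(1) lt]
    by (rule eq_matI) auto
qed

lemma sum_list_upt: "sum_list (map f [0..<m]) = (\<Sum>q\<in>{0..<m}. f q)"
  by (induction m) auto

lemma Tf_kraus: assumes "D > 0" "m < D*D"
  shows "is_kraus_rep D (Tf D m) (Klist D m)"
  unfolding is_kraus_rep_def
proof (intro conjI ballI)
  show "set (Klist D m) \<subseteq> carrier_mat D D" unfolding Klist_def Eq_def by auto
  fix X :: "complex mat" assume X: "X \<in> carrier_mat D D"
  have gl: "\<forall>q\<in>set [0..<m]. gg D q < D*D" using assms(2) by (auto simp: gg_def)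
  show "Tf D m X = kraus_sum D (Klist D m) X"
    unfolding Klist_def kraus_cons ks_units[OF X assms(1) gl] Sm_conj[OF assms(1) X] sum_list_upt
      Tf_def by (auto intro!: eq_matI)
qed

fun sh :: "nat \<Rightarrow> nat \<Rightarrow> nat \<Rightarrow> nat" where
  "sh D 0 a = a"
| "sh D (Suc n) a = sh D n (pr D a)"


lemma sh_lt': "D > 0 \<Longrightarrow> a < D \<Longrightarrow> sh D n a < D"
  by (induction n arbitrary: a) (auto simp: pr_lt)

fun Mc :: "nat \<Rightarrow> nat \<Rightarrow> nat \<Rightarrow> nat \<Rightarrow> nat \<Rightarrow> nat" where
  "Mc D m 0 a k = 0"
| "Mc D m (Suc n) a k = Mc D m n (pr D a) k +
     (\<Sum>q\<in>{0..<m}. if gg D q div D = a then (if k = sh D n (gg D q mod D) then 1 else 0) + Mc D m n (gg D q mod D) k else 0)"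

lemma pr_inj: assumes "D > 0" "a < D" "b < D" shows "pr D a = pr D b \<longleftrightarrow> a = b"
proof
  assume "pr D a = pr D b"
  then have "a = Suc (pr D b) mod D" using pr_iff[OF assms(1) assms(2) pr_lt[OF assms(1)]] by simp
  moreover have "b = Suc (pr D b) mod D" using pr_iff[OF assms(1) assms(3) pr_lt[OF assms(1)], of b] by simp
  ultimately show "a = b" by simp
qed simp

lemma per_q: assumes "D > 0" "t < D"
  shows "(\<Sum>k\<in>{0..<D}. of_nat (if c then (if k = t then 1 else 0) + M k else 0) * (X $$ (k,k) :: complex))
     = (if c then X $$ (t,t) + (\<Sum>k\<in>{0..<D}. of_nat (M k) * X $$ (k,k)) else 0)"
proof (cases c)
  case True
  have "(\<Sum>k\<in>{0..<D}. of_nat (if c then (if k = t then 1 else 0) + M k else 0) * (X $$ (k,k) :: complex))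
     = (\<Sum>k\<in>{0..<D}. (if k = t then X $$ (k,k) else 0) + of_nat (M k) * X $$ (k,k))"
    using True by (intro sum.cong) (auto simp: distrib_right)
  also have "\<dots> = X $$ (t,t) + (\<Sum>k\<in>{0..<D}. of_nat (M k) * X $$ (k,k))"
    by (simp only: sum.distrib sum_pick[OF assms(2)])
  finally show ?thesis using True by simp
qed simp

lemma Tf_iter: assumes "D > 0" "X \<in> carrier_mat D D"
  shows "(Tf D m ^^ n) X = mat D D (\<lambda>(a,b). X $$ (sh D n a, sh D n b) +
      (if a = b then (\<Sum>k\<in>{0..<D}. of_nat (Mc D m n a k) * X $$ (k,k)) else 0))"
proof (induction n)
  case 0
  show ?case using assms(2) by (auto intro!: eq_matI)
next
  case (Suc n)
  define Y where "Y = (Tf D m ^^ n) X"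
  have Y: "Y = mat D D (\<lambda>(a,b). X $$ (sh D n a, sh D n b) +
      (if a = b then (\<Sum>k\<in>{0..<D}. of_nat (Mc D m n a k) * X $$ (k,k)) else 0))"
    using Suc Y_def by simp
  have gl: "\<And>q. gg D q mod D < D" using assms(1) by simp
  show ?case unfolding funpow.simps comp_def Y_def[symmetric]
  proof (rule eq_matI)
    fix a b assume "a < dim_row (mat D D (\<lambda>(a,b). X $$ (sh D (Suc n) a, sh D (Suc n) b) +
      (if a = b then (\<Sum>k\<in>{0..<D}. of_nat (Mc D m (Suc n) a k) * X $$ (k,k)) else 0)))"
      "b < dim_col (mat D D (\<lambda>(a,b). X $$ (sh D (Suc n) a, sh D (Suc n) b) +
      (if a = b then (\<Sum>k\<in>{0..<D}. of_nat (Mc D m (Suc n) a k) * X $$ (k,k)) else 0)))"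
    then have a: "a < D" and b: "b < D" by auto
    have e1: "Tf D m Y $$ (a,b) = Y $$ (pr D a, pr D b) +
     (if a = b then (\<Sum>q\<in>{0..<m}. if gg D q div D = a then Y $$ (gg D q mod D, gg D q mod D) else 0) else 0)"
      unfolding Tf_def using a b by simp
    have Ypr: "Y $$ (pr D a, pr D b) = X $$ (sh D (Suc n) a, sh D (Suc n) b) +
      (if a = b then (\<Sum>k\<in>{0..<D}. of_nat (Mc D m n (pr D a) k) * X $$ (k,k)) else 0)"
      unfolding Y using pr_lt[OF assms(1)] pr_inj[OF assms(1) a b] by simp
    have Yq: "\<And>q. Y $$ (gg D q mod D, gg D q mod D) = X $$ (sh D n (gg D q mod D), sh D n (gg D q mod D)) +
      (\<Sum>k\<in>{0..<D}. of_nat (Mc D m n (gg D q mod D) k) * X $$ (k,k))"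
      unfolding Y using gl by simp
    have main: "(\<Sum>k\<in>{0..<D}. of_nat (Mc D m (Suc n) a k) * X $$ (k,k)) =
      (\<Sum>k\<in>{0..<D}. of_nat (Mc D m n (pr D a) k) * X $$ (k,k)) +
      (\<Sum>q\<in>{0..<m}. if gg D q div D = a then Y $$ (gg D q mod D, gg D q mod D) else 0)"
    proof -
      have "(\<Sum>k\<in>{0..<D}. of_nat (Mc D m (Suc n) a k) * X $$ (k,k)) =
        (\<Sum>k\<in>{0..<D}. of_nat (Mc D m n (pr D a) k) * X $$ (k,k)) +
        (\<Sum>k\<in>{0..<D}. \<Sum>q\<in>{0..<m}. of_nat (if gg D q div D = a then (if k = sh D n (gg D q mod D) then 1 else 0) + Mc D m n (gg D q mod D) k else 0) * X $$ (k,k))"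
        by (simp only: Mc.simps of_nat_add of_nat_sum distrib_right sum.distrib sum_distrib_right)
      also have "(\<Sum>k\<in>{0..<D}. \<Sum>q\<in>{0..<m}. of_nat (if gg D q div D = a then (if k = sh D n (gg D q mod D) then 1 else 0) + Mc D m n (gg D q mod D) k else 0) * X $$ (k,k))
        = (\<Sum>q\<in>{0..<m}. \<Sum>k\<in>{0..<D}. of_nat (if gg D q div D = a then (if k = sh D n (gg D q mod D) then 1 else 0) + Mc D m n (gg D q mod D) k else 0) * X $$ (k,k))"
        by (rule sum.swap)
      also have "\<dots> = (\<Sum>q\<in>{0..<m}. if gg D q div D = a then Y $$ (gg D q mod D, gg D q mod D) else 0)"
        by (rule sum.cong[OF refl], subst per_q[OF assms(1) sh_lt'[OF assms(1) gl]]) (simp add: Yq)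
      finally show ?thesis .
    qed
    show "Tf D m Y $$ (a,b) = mat D D (\<lambda>(a,b). X $$ (sh D (Suc n) a, sh D (Suc n) b) +
      (if a = b then (\<Sum>k\<in>{0..<D}. of_nat (Mc D m (Suc n) a k) * X $$ (k,k)) else 0)) $$ (a,b)"
    proof (cases "a = b")
      case True
      have "Tf D m Y $$ (a,b) = X $$ (sh D (Suc n) a, sh D (Suc n) b) +
        ((\<Sum>k\<in>{0..<D}. of_nat (Mc D m n (pr D a) k) * X $$ (k,k)) +
        (\<Sum>q\<in>{0..<m}. if gg D q div D = a then Y $$ (gg D q mod D, gg D q mod D) else 0))"
        unfolding e1 Ypr using True by (simp only: if_True simp_thms add.assoc)
      also have "\<dots> = X $$ (sh D (Suc n) a, sh D (Suc n) b) + (\<Sum>k\<in>{0..<D}. of_nat (Mc D m (Suc n) a k) * X $$ (k,k))"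
        by (simp only: main)
      finally show ?thesis using a b True by simp
    next
      case False
      then show ?thesis unfolding e1 Ypr using a b by (simp del: Mc.simps)
    qed
  qed (simp_all add: Tf_def)
qed

lemma mv_entry: assumes "A \<in> carrier_mat n k" "v \<in> carrier_vec k" "i < n"
  shows "(A *\<^sub>v v) $ i = (\<Sum>j\<in>{0..<k}. A $$ (i,j) * v $ j)"
  using assms by (auto simp: scalar_prod_def intro!: sum.cong)

lemma rank_sel:
  fixes M :: "complex mat"
  assumes M: "M \<in> carrier_mat n n" and f: "\<And>l. l < k \<Longrightarrow> f l < n"
    and ker: "\<And>y. y \<in> carrier_vec k \<Longrightarrow> mat n k (\<lambda>(i,l). M $$ (i, f l)) *\<^sub>v y = 0\<^sub>v n \<Longrightarrow> y = 0\<^sub>v k"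
  shows "k \<le> vec_space.rank n M"
proof -
  define C where "C = mat n k (\<lambda>(i,l). M $$ (i, f l))"
  have C: "C \<in> carrier_mat n k" unfolding C_def by simp
  have colC: "\<And>l. l < k \<Longrightarrow> col C l = col M (f l)"
    using M f unfolding C_def by (auto intro!: eq_vecI)
  have dist: "distinct (cols C)"
  proof (rule ccontr)
    assume "\<not> distinct (cols C)"
    then obtain l1 l2 where l: "l1 \<noteq> l2" "l1 < k" "l2 < k" "cols C ! l1 = cols C ! l2"
      using C by (auto simp: distinct_conv_nth)
    then have cc: "col C l1 = col C l2" using C by simp
    define y :: "complex vec" where "y = vec k (\<lambda>l. if l = l1 then 1 else if l = l2 then -1 else 0)"
    have y: "y \<in> carrier_vec k" unfolding y_def by simp
    have "C *\<^sub>v y = 0\<^sub>v n"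
    proof (rule eq_vecI)
      fix i assume "i < dim_vec (0\<^sub>v n :: complex vec)"
      then have i: "i < n" by simp
      have "(C *\<^sub>v y) $ i = (\<Sum>j\<in>{0..<k}. C $$ (i,j) * y $ j)" by (rule mv_entry[OF C y i])
      also have "\<dots> = (\<Sum>j\<in>{0..<k}. (if j = l1 then C $$ (i,j) else 0) + (if j = l2 then - C $$ (i,j) else 0))"
        by (rule sum.cong[OF refl]) (use l in \<open>auto simp: y_def\<close>)
      also have "\<dots> = C $$ (i,l1) - C $$ (i,l2)"
        by (simp only: sum.distrib sum_pick[OF l(2)] sum_pick[OF l(3)]) simp
      also have "\<dots> = 0"
      proof -
        have e: "col C l1 $ i = col C l2 $ i" unfolding cc by (rule refl)
        have "C $$ (i,l1) = col C l1 $ i" using C i l(2) by simp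
        also have "\<dots> = col C l2 $ i" by (rule e)
        also have "\<dots> = C $$ (i,l2)" using C i l(3) by simp
        finally show ?thesis by simp
      qed
      finally show "(C *\<^sub>v y) $ i = 0\<^sub>v n $ i" using i by simp
    qed (use C in simp)
    then have "y = 0\<^sub>v k" using ker[OF y] unfolding C_def by simp
    then have "y $ l1 = 0" using l by simp
    then show False unfolding y_def using l by simp
  qed
  have indpt: "module.lin_indpt class_ring (module_vec TYPE(complex) n) (set (cols C))"
  proof (rule ccontr)
    assume "\<not> module.lin_indpt class_ring (module_vec TYPE(complex) n) (set (cols C))"
    then obtain v where v: "v \<in> carrier_vec k" "v \<noteq> 0\<^sub>v k" "C *\<^sub>v v = 0\<^sub>v n"
      using vec_space.lin_depE[OF C _ dist] by blast
    then show False using ker[of v] unfolding C_def by simp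
  qed
  have sub: "set (cols C) \<subseteq> set (cols M)"
  proof
    fix x assume "x \<in> set (cols C)"
    then obtain l where "l < k" "x = col C l" using C by (auto simp: in_set_conv_nth)
    then show "x \<in> set (cols M)" using colC f M by (auto simp: in_set_conv_nth intro!: exI[of _ "f l"])
  qed
  have "card (set (cols C)) = k" using dist C by (simp add: distinct_card)
  then show ?thesis using vec_space.rank_ge_card_indpt[OF M sub indpt] by simp
qed

lemma full_rank_diag_plus:
  fixes M :: "complex mat" and w :: "nat \<Rightarrow> bool" and d :: "nat \<Rightarrow> nat"
  assumes M: "M \<in> carrier_mat n n"
    and ent: "\<And>p q. p < n \<Longrightarrow> q < n \<Longrightarrow> M $$ (p,q) = (if w p \<and> w q then 1 else 0) + (if p = q then of_nat (d p) else 0)"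
    and dpos: "\<And>p. p < n \<Longrightarrow> d p > 0"
  shows "vec_space.rank n M = n"
proof -
  have "det M \<noteq> 0"
  proof
    assume "det M = 0"
    then obtain v where v: "v \<in> carrier_vec n" "v \<noteq> 0\<^sub>v n" "M *\<^sub>v v = 0\<^sub>v n"
      using det_0_iff_vec_prod_zero_field[OF M] by blast
    define c where "c = (\<Sum>q\<in>{0..<n}. if w q then v $ q else 0)"
    have row: "\<And>p. p < n \<Longrightarrow> (if w p then c else 0) + of_nat (d p) * v $ p = 0"
    proof -
      fix p assume p: "p < n"
      have "0 = (M *\<^sub>v v) $ p" using v(3) p by simp
      also have "\<dots> = (\<Sum>q\<in>{0..<n}. M $$ (p,q) * v $ q)" by (rule mv_entry[OF M v(1) p])
      also have "\<dots> = (\<Sum>q\<in>{0..<n}. (if w p then (if w q then v $ q else 0) else 0) + (if q = p then of_nat (d p) * v $ q else 0))"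
        by (rule sum.cong[OF refl]) (auto simp: ent p distrib_right)
      also have "\<dots> = (if w p then c else 0) + of_nat (d p) * v $ p"
        by (simp only: sum.distrib sum_pick[OF p]) (simp add: c_def)
      finally show "(if w p then c else 0) + of_nat (d p) * v $ p = 0" by simp
    qed
    have vp: "\<And>p. p < n \<Longrightarrow> v $ p = - (if w p then c else 0) / of_nat (d p)"
    proof -
      fix p assume p: "p < n"
      from row[OF p] have e: "of_nat (d p) * v $ p = - (if w p then c else 0)" by (simp only: add_eq_0_iff)
      have "(of_nat (d p) :: complex) \<noteq> 0" using dpos[OF p] by simp
      then show "v $ p = - (if w p then c else 0) / of_nat (d p)" using e by (cases "w p") (simp_all add: field_simps)
    qed
    define s where "s = (\<Sum>q\<in>{0..<n}. if w q then 1 / real (d q) else 0)"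
    have s0: "s \<ge> 0" unfolding s_def by (intro sum_nonneg) auto
    have "c = (\<Sum>q\<in>{0..<n}. if w q then v $ q else 0)" by (simp only: c_def)
    also have "\<dots> = (\<Sum>q\<in>{0..<n}. if w q then - c / of_nat (d q) else 0)"
      by (rule sum.cong[OF refl]) (simp add: vp)
    also have "\<dots> = - c * of_real s"
      unfolding s_def of_real_sum sum_distrib_left
      by (rule sum.cong[OF refl]) simp
    finally have "c = - (c * of_real s)" by simp
    then have "c + c * of_real s = 0" by (simp only: eq_neg_iff_add_eq_0)
    then have "c * (1 + of_real s) = 0" by (simp add: distrib_left)
    moreover have "(1 + of_real s :: complex) \<noteq> 0"
    proof
      assume "(1 + of_real s :: complex) = 0"
      then have "Re (1 + of_real s) = 0" by simp
      then show False using s0 by simp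
    qed
    ultimately have c0: "c = 0" by simp
    have "v = 0\<^sub>v n"
      by (rule eq_vecI) (use v(1) vp c0 in auto)
    then show False using v(2) by simp
  qed
  then show ?thesis using vec_space.det_rank_iff[OF M] by simp
qed

lemma conj_unit_entry: assumes A: "A \<in> carrier_mat D D" and "i < D" "j < D" "a < D" "b < D"
  shows "(A * mat_unit D i j * mat_adjoint A) $$ (a,b) = A $$ (a,i) * conjugate (A $$ (b,j))"
proof -
  have m1: "A * mat_unit D i j = mat D D (\<lambda>(a,d). if d = j then A $$ (a,i) else 0)"
  proof (rule eq_matI)
    fix a d assume "a < dim_row (mat D D (\<lambda>(a,d). if d = j then A $$ (a,i) else 0))" "d < dim_col (mat D D (\<lambda>(a,d). if d = j then A $$ (a,i) else 0))"
    then have a: "a < D" and d: "d < D" by auto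
    have "(A * mat_unit D i j) $$ (a,d) = (\<Sum>c\<in>{0..<D}. A $$ (a,c) * mat_unit D i j $$ (c,d))"
      by (rule mult_entry[OF A unit_carrier a d])
    also have "\<dots> = (\<Sum>c\<in>{0..<D}. if c = i then (if d = j then A $$ (a,c) else 0) else 0)"
      by (rule sum.cong[OF refl]) (simp add: unit_entry d)
    also have "\<dots> = (if d = j then A $$ (a,i) else 0)" by (rule sum_pick[OF assms(2)])
    finally show "(A * mat_unit D i j) $$ (a,d) = mat D D (\<lambda>(a,d). if d = j then A $$ (a,i) else 0) $$ (a,d)" using a d by simp
  qed (use A in auto)
  have c1: "mat D D (\<lambda>(a,d). if d = j then A $$ (a,i) else 0) \<in> carrier_mat D D" by simp
  have "(A * mat_unit D i j * mat_adjoint A) $$ (a,b) = (\<Sum>d\<in>{0..<D}. mat D D (\<lambda>(a,d). if d = j then A $$ (a,i) else 0) $$ (a,d) * mat_adjoint A $$ (d,b))"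
    unfolding m1 by (rule mult_entry[OF c1 adj_carrier[OF A] assms(4) assms(5)])
  also have "\<dots> = (\<Sum>d\<in>{0..<D}. if d = j then A $$ (a,i) * conjugate (A $$ (b,d)) else 0)"
    by (rule sum.cong[OF refl]) (auto simp: assms adj_entry[OF A])
  also have "\<dots> = A $$ (a,i) * conjugate (A $$ (b,j))" by (rule sum_pick[OF assms(3)])
  finally show ?thesis .
qed

lemma divmod_lt: "(p::nat) < D*D \<Longrightarrow> p div D < D" "D > 0 \<Longrightarrow> (p::nat) mod D < D"
  by (auto simp: less_mult_imp_div_less)

lemma choi_dims[simp]: "dim_row (choi D T) = D*D" "dim_col (choi D T) = D*D" "choi D T \<in> carrier_mat (D*D) (D*D)"
  unfolding choi_def by auto

lemma choi_rep: assumes "is_kraus_rep D T As" shows "choi D T = choi D (kraus_sum D As)"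
  using assms unfolding choi_def is_kraus_rep_def by (intro eq_matI) auto

lemma choi_rank_le: assumes "set As \<subseteq> carrier_mat D D" "D > 0"
  shows "vec_space.rank (D*D) (choi D (kraus_sum D As)) \<le> length As"
  using assms(1)
proof (induction As)
  case Nil
  have "choi D (kraus_sum D []) = 0\<^sub>m (D*D) (D*D)"
    unfolding choi_def kraus_sum_def by (intro eq_matI) (auto simp: divmod_lt assms(2))
  then show ?case using vec_space.rank_0I by simp
next
  case (Cons A As)
  have A: "A \<in> carrier_mat D D" and As: "set As \<subseteq> carrier_mat D D" using Cons.prems by auto
  define C1 where "C1 = mat (D*D) (D*D) (\<lambda>(p,q). A $$ (p div D, p mod D) * conjugate (A $$ (q div D, q mod D)))"
  have split: "choi D (kraus_sum D (A#As)) = C1 + choi D (kraus_sum D As)"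
  proof (rule eq_matI)
    fix p q assume "p < dim_row (C1 + choi D (kraus_sum D As))" "q < dim_col (C1 + choi D (kraus_sum D As))"
    then have p: "p < D*D" and q: "q < D*D" by (auto simp: C1_def)
    have ks: "kraus_sum D As (mat_unit D (p mod D) (q mod D)) \<in> carrier_mat D D"
      by (rule ks_carrier[OF As unit_carrier])
    show "choi D (kraus_sum D (A#As)) $$ (p,q) = (C1 + choi D (kraus_sum D As)) $$ (p,q)"
    proof -
      have e: "(A * mat_unit D (p mod D) (q mod D) * mat_adjoint A) $$ (p div D, q div D) = A $$ (p div D, p mod D) * conjugate (A $$ (q div D, q mod D))"
        using divmod_lt assms(2) p q by (intro conj_unit_entry[OF A]) auto
      have c: "A * mat_unit D (p mod D) (q mod D) * mat_adjoint A \<in> carrier_mat D D"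
        using A by (intro mult_carrier_mat adj_carrier) auto
      show ?thesis
        using p q ks A assms(2) c unfolding choi_def C1_def kraus_cons
        by (simp del: index_mult_mat add: divmod_lt e)
    qed
  qed (auto simp: C1_def choi_def)
  have r1: "vec_space.rank (D*D) C1 \<le> 1"
    by (rule vec_space.rank_le_1_product_entries[of C1 "D*D" "D*D" "\<lambda>p. A $$ (p div D, p mod D)" "\<lambda>q. conjugate (A $$ (q div D, q mod D))"])
      (auto simp: C1_def)
  have "vec_space.rank (D*D) (choi D (kraus_sum D (A#As))) \<le> vec_space.rank (D*D) C1 + vec_space.rank (D*D) (choi D (kraus_sum D As))"
    unfolding split by (rule vec_space.rank_subadditive) (auto simp: C1_def choi_def)
  then show ?case using r1 Cons.IH[OF As] by simp
qed

lemma pq_eq: "(p::nat) = q \<longleftrightarrow> p div D = q div D \<and> p mod D = q mod D"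
proof
  assume "p div D = q div D \<and> p mod D = q mod D"
  then have "p div D * D + p mod D = q div D * D + q mod D" by simp
  then show "p = q" by (simp only: div_mult_mod_eq)
qed simp

lemma choi_iter: assumes "D > 0" "p < D*D" "q < D*D"
  shows "choi D (Tf D m ^^ N) $$ (p,q) = (if sh D N (p div D) = p mod D \<and> sh D N (q div D) = q mod D then 1 else 0)
     + (if p = q then of_nat (Mc D m N (p div D) (p mod D)) else 0)"
proof -
  have a: "p div D < D" "q div D < D" "p mod D < D" "q mod D < D" using assms divmod_lt by auto
  let ?U = "mat_unit D (p mod D) (q mod D)"
  have s: "(\<Sum>k\<in>{0..<D}. of_nat (Mc D m N (p div D) k) * ?U $$ (k,k)) =
     (if p mod D = q mod D then of_nat (Mc D m N (p div D) (p mod D)) else 0)"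
  proof -
    have "(\<Sum>k\<in>{0..<D}. of_nat (Mc D m N (p div D) k) * ?U $$ (k,k)) =
      (\<Sum>k\<in>{0..<D}. if k = p mod D then (if p mod D = q mod D then of_nat (Mc D m N (p div D) k) else 0) else 0)"
      by (rule sum.cong[OF refl]) (auto simp: unit_entry)
    also have "\<dots> = (if p mod D = q mod D then of_nat (Mc D m N (p div D) (p mod D)) else 0)"
      by (rule sum_pick[OF a(3)])
    finally show ?thesis .
  qed
  have "choi D (Tf D m ^^ N) $$ (p,q) = (Tf D m ^^ N) ?U $$ (p div D, q div D)"
    unfolding choi_def using assms by simp
  also have "\<dots> = ?U $$ (sh D N (p div D), sh D N (q div D)) +
     (if p div D = q div D then (\<Sum>k\<in>{0..<D}. of_nat (Mc D m N (p div D) k) * ?U $$ (k,k)) else 0)"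
    unfolding Tf_iter[OF assms(1) unit_carrier] using a by simp
  also have "\<dots> = (if sh D N (p div D) = p mod D \<and> sh D N (q div D) = q mod D then 1 else 0)
     + (if p = q then of_nat (Mc D m N (p div D) (p mod D)) else 0)"
    unfolding s using a sh_lt'[OF assms(1)] pq_eq[of p q D] by (simp add: unit_entry)
  finally show ?thesis .
qed

lemma gg_lt: "q < m \<Longrightarrow> m < D*D \<Longrightarrow> gg D q < D*D" by (auto simp: gg_def)
lemma gg_neq: "gg D q \<noteq> D" by (auto simp: gg_def)
lemma gg_inj: "gg D q = gg D l \<Longrightarrow> q = l" by (auto simp: gg_def split: if_splits)
lemma gg0: "D > 0 \<Longrightarrow> gg D 0 = 0" by (simp add: gg_def)

lemma pr_sub: "(a::nat) < D \<Longrightarrow> 0 < a \<Longrightarrow> pr D a = a - 1" unfolding pr_def using h2 by simp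
lemma pr_zero: "0 < D \<Longrightarrow> pr D 0 = D - 1" unfolding pr_def using h2[of 0 D] by simp

lemma sh_sub: "a < D \<Longrightarrow> n \<le> a \<Longrightarrow> sh D n a = a - n"
proof (induction n arbitrary: a)
  case 0 then show ?case by simp
next
  case (Suc n)
  then have "pr D a = a - 1" by (intro pr_sub) auto
  then show ?case using Suc.IH[of "a - 1"] Suc.prems by simp
qed

lemma sh_hit: assumes "D > 0" "k < D" shows "sh D (D - k) 0 = k"
proof -
  have "D - k = Suc (D - 1 - k)" using assms by simp
  then have "sh D (D - k) 0 = sh D (D - 1 - k) (D - 1)" using pr_zero[OF assms(1)] by simp
  also have "\<dots> = k" using assms by (subst sh_sub) auto
  finally show ?thesis .
qed

lemma Mc_P1: "Mc D m n (pr D a) k \<le> Mc D m (Suc n) a k" by simp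

lemma Mc_P2: assumes "D > 0" "m > 0"
  shows "(if k = sh D n 0 then 1 else 0) + Mc D m n 0 k \<le> Mc D m (Suc n) 0 k"
proof -
  let ?f = "\<lambda>q. if gg D q div D = 0 then (if k = sh D n (gg D q mod D) then 1 else 0) + Mc D m n (gg D q mod D) k else 0"
  have "?f 0 \<le> sum ?f {0..<m}" by (rule member_le_sum) (use assms in auto)
  then show ?thesis using gg0[OF assms(1)] by simp
qed

lemma Mc_P3: assumes "D > 0" "m > 0" shows "Mc D m n 0 k \<le> Mc D m (n + t) 0 k"
proof (induction t)
  case (Suc t)
  then show ?case using Mc_P2[OF assms, of k "n + t"] by simp
qed simp

lemma Mc_P4: assumes "a < D" shows "Mc D m n 0 k \<le> Mc D m (n + a) a k"
  using assms
proof (induction a)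
  case (Suc a)
  have "pr D (Suc a) = a" using Suc.prems by (subst pr_sub) auto
  then have "Mc D m (n + a) a k \<le> Mc D m (n + Suc a) (Suc a) k" using Mc_P1[of D m "n+a" "Suc a" k] by simp
  then show ?case using Suc by simp
qed simp

lemma Mc_pos: assumes "D > 0" "m > 0" "a < D" "k < D" shows "0 < Mc D m (2*D+1) a k"
proof -
  have "1 \<le> Mc D m (Suc (D - k)) 0 k" using Mc_P2[OF assms(1,2), of k "D - k"] sh_hit[OF assms(1,4)] by simp
  also have "\<dots> \<le> Mc D m (Suc (D - k) + (2*D+1 - a - Suc (D - k))) 0 k" by (rule Mc_P3[OF assms(1,2)])
  also have "Suc (D - k) + (2*D+1 - a - Suc (D - k)) = 2*D+1 - a" using assms by simp
  also have "Mc D m (2*D+1 - a) 0 k \<le> Mc D m (2*D+1 - a + a) a k" by (rule Mc_P4[OF assms(3)])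
  also have "2*D+1 - a + a = 2*D+1" using assms by simp
  finally show ?thesis by (simp del: Mc.simps)
qed

lemma primitive_Tf: assumes "D > 0" "m > 0" shows "primitive D (Tf D m)"
  unfolding primitive_def
proof (rule exI[of _ "2*D+1"])
  have "vec_space.rank (D*D) (choi D (Tf D m ^^ (2*D+1))) = D*D"
  proof (rule full_rank_diag_plus[of _ _ "\<lambda>p. sh D (2*D+1) (p div D) = p mod D" "\<lambda>p. Mc D m (2*D+1) (p div D) (p mod D)"])
    show "choi D (Tf D m ^^ (2 * D + 1)) \<in> carrier_mat (D * D) (D * D)" by simp
    fix p q assume "p < D*D" "q < D*D"
    then show "choi D (Tf D m ^^ (2 * D + 1)) $$ (p, q) =
           (if sh D (2 * D + 1) (p div D) = p mod D \<and> sh D (2 * D + 1) (q div D) = q mod D then 1 else 0) +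
           (if p = q then of_nat (Mc D m (2 * D + 1) (p div D) (p mod D)) else 0)"
      by (rule choi_iter[OF assms(1)])
  next
    fix p assume "p < D*D"
    then show "0 < Mc D m (2 * D + 1) (p div D) (p mod D)"
      using assms by (intro Mc_pos) (auto simp: divmod_lt)
  qed
  then show "vec_space.rank (D*D) (choi D (Tf D m ^^ (2*D+1))) = D^2" by (simp add: power2_eq_square)
qed

definition cntf :: "nat \<Rightarrow> nat \<Rightarrow> nat \<Rightarrow> nat" where
  "cntf D m p = (\<Sum>q\<in>{0..<m}. if gg D q = p then 1 else 0)"

lemma cnt: assumes "D > 0" shows "Mc D m 1 (p div D) (p mod D) = cntf D m p"
  unfolding cntf_def
  by (simp, rule sum.cong[OF refl]) (use pq_eq[of "gg D _" p D] in auto)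

lemma cnt_D: "cntf D m D = 0" unfolding cntf_def using gg_neq by simp

lemma cnt_gg: assumes "l < m" shows "cntf D m (gg D l) = 1"
proof -
  have "cntf D m (gg D l) = (\<Sum>q\<in>{0..<m}. if q = l then 1 else 0)"
    unfolding cntf_def by (rule sum.cong[OF refl]) (use gg_inj in auto)
  also have "\<dots> = 1" using assms by simp
  finally show ?thesis .
qed

lemma choi1: assumes "D > 0" "p < D*D" "q < D*D"
  shows "choi D (Tf D m) $$ (p,q) = (if pr D (p div D) = p mod D \<and> pr D (q div D) = q mod D then 1 else 0)
     + (if p = q then of_nat (cntf D m p) else 0)"
proof -
  have sh1: "\<And>a. sh D 1 a = pr D a" by (simp add: One_nat_def)
  have f1: "Tf D m ^^ 1 = Tf D m" by (simp add: One_nat_def)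
  note e = choi_iter[OF assms, where m=m and N=1, unfolded cnt[OF assms(1)] sh1 f1]
  show ?thesis using e by (simp del: Mc.simps)
qed

lemma rank_lower: assumes D2: "D \<ge> 2" and m0: "0 < m" and mD: "m < D*D"
  shows "Suc m \<le> vec_space.rank (D*D) (choi D (Tf D m))"
proof -
  have D0: "D > 0" using D2 by simp
  define f where "f l = (if l < m then gg D l else D)" for l
  define w where "w p = (pr D (p div D) = p mod D)" for p
  have DD: "D < D*D"
  proof -
    have "D*1 < D*D" using D2 by (intro mult_strict_left_mono) auto
    then show ?thesis by simp
  qed
  have flt: "\<And>l. l < Suc m \<Longrightarrow> f l < D*D" unfolding f_def using gg_lt[OF _ mD] DD by auto
  have wD: "w D"
  proof -
    have "pr D 1 = 0" using D2 by (subst pr_sub) auto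
    then show ?thesis unfolding w_def using D0 by simp
  qed
  have M: "choi D (Tf D m) \<in> carrier_mat (D*D) (D*D)" by simp
  show ?thesis
  proof (rule rank_sel[OF M flt])
    fix y :: "complex vec"
    assume y: "y \<in> carrier_vec (Suc m)"
      and ker: "mat (D*D) (Suc m) (\<lambda>(i,l). choi D (Tf D m) $$ (i, f l)) *\<^sub>v y = 0\<^sub>v (D*D)"
    define C where "C = mat (D*D) (Suc m) (\<lambda>(i,l). choi D (Tf D m) $$ (i, f l))"
    have C: "C \<in> carrier_mat (D*D) (Suc m)" unfolding C_def by simp
    define c where "c = (\<Sum>l\<in>{0..<Suc m}. if w (f l) then y $ l else 0)"
    have G: "\<And>i. i < D*D \<Longrightarrow> (C *\<^sub>v y) $ i = (if w i then c else 0) + (\<Sum>l\<in>{0..<Suc m}. if i = f l then of_nat (cntf D m i) * y $ l else 0)"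
    proof -
      fix i assume i: "i < D*D"
      have "(C *\<^sub>v y) $ i = (\<Sum>l\<in>{0..<Suc m}. C $$ (i,l) * y $ l)" by (rule mv_entry[OF C y i])
      also have "\<dots> = (\<Sum>l\<in>{0..<Suc m}. (if w i then (if w (f l) then y $ l else 0) else 0) + (if i = f l then of_nat (cntf D m i) * y $ l else 0))"
        by (rule sum.cong[OF refl]) (use i flt in \<open>auto simp: C_def choi1[OF D0] w_def distrib_right\<close>)
      also have "\<dots> = (if w i then c else 0) + (\<Sum>l\<in>{0..<Suc m}. if i = f l then of_nat (cntf D m i) * y $ l else 0)"
        by (simp only: sum.distrib) (cases "w i", simp_all add: c_def)
      finally show "(C *\<^sub>v y) $ i = (if w i then c else 0) + (\<Sum>l\<in>{0..<Suc m}. if i = f l then of_nat (cntf D m i) * y $ l else 0)" .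
    qed
    have z: "\<And>i. i < D*D \<Longrightarrow> (C *\<^sub>v y) $ i = 0" using ker unfolding C_def[symmetric] by simp
    have c0: "c = 0"
    proof -
      have "0 = (C *\<^sub>v y) $ D" using z DD by simp
      also have "\<dots> = c" unfolding G[OF DD] using wD cnt_D by simp
      finally show ?thesis by simp
    qed
    have yl: "y $ l0 = 0" if l0: "l0 < m" for l0
    proof -
      have gl: "gg D l0 < D*D" using gg_lt[OF l0 mD] .
      have iff: "(gg D l0 = f l) = (l = l0)" if "l < Suc m" for l
        using that l0 by (cases "l < m") (auto simp: f_def gg_neq dest: gg_inj)
      have "0 = (C *\<^sub>v y) $ gg D l0" using z gl by simp
      also have "\<dots> = (if w (gg D l0) then c else 0) + (\<Sum>l\<in>{0..<Suc m}. if gg D l0 = f l then of_nat (cntf D m (gg D l0)) * y $ l else 0)"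
        by (rule G[OF gl])
      also have "\<dots> = 0 + (\<Sum>l\<in>{0..<Suc m}. if l = l0 then y $ l else 0)"
        unfolding c0 cnt_gg[OF l0] by (intro arg_cong2[where f="(+)"] sum.cong refl) (auto simp: iff)
      also have "\<dots> = y $ l0" using l0 by simp
      finally show ?thesis by simp
    qed
    have ym: "y $ m = 0"
    proof -
      have "0 = c" using c0 by simp
      also have "\<dots> = (\<Sum>l\<in>{0..<Suc m}. if l = m then y $ l else 0)"
        unfolding c_def by (rule sum.cong[OF refl]) (use yl wD in \<open>auto simp: f_def\<close>)
      also have "\<dots> = y $ m" by simp
      finally show ?thesis by simp
    qed
    show "y = 0\<^sub>v (Suc m)"
    proof (rule eq_vecI)
      fix l assume "l < dim_vec (0\<^sub>v (Suc m) :: complex vec)"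
      then have "l < Suc m" by simp
      then show "y $ l = 0\<^sub>v (Suc m) $ l"
      proof (cases "l < m")
        case True then show ?thesis using yl[OF True] \<open>l < Suc m\<close> by simp
      next
        case False
        with \<open>l < Suc m\<close> have "l = m" by simp
        then show ?thesis using ym by simp
      qed
    qed (use y in simp)
  qed
qed

theorem lemma3:
  fixes D r :: nat
  assumes "D \<ge> 2" and "2 \<le> r" and "r \<le> D^2"
  shows "\<exists>T. cp_map D T \<and> primitive D T \<and> kraus_rank D T = r"
proof -
  define m where "m = r - 1"
  have D0: "D > 0" using assms by simp
  have m0: "m > 0" and mD: "m < D*D" and rm: "r = Suc m" using assms by (auto simp: m_def power2_eq_square)
  have rep: "is_kraus_rep D (Tf D m) (Klist D m)" by (rule Tf_kraus[OF D0 mD])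
  have len: "length (Klist D m) = r" unfolding Klist_def rm by simp
  have "kraus_rank D (Tf D m) = r"
    unfolding kraus_rank_def
  proof (rule Least_equality)
    show "\<exists>As. is_kraus_rep D (Tf D m) As \<and> length As = r" using rep len by blast
  next
    fix k assume "\<exists>As. is_kraus_rep D (Tf D m) As \<and> length As = k"
    then obtain As where As: "is_kraus_rep D (Tf D m) As" "length As = k" by blast
    have "r \<le> vec_space.rank (D*D) (choi D (Tf D m))" using rank_lower[OF assms(1) m0 mD] rm by simp
    also have "\<dots> = vec_space.rank (D*D) (choi D (kraus_sum D As))" using choi_rep[OF As(1)] by simp
    also have "\<dots> \<le> length As" by (rule choi_rank_le) (use As(1) D0 in \<open>auto simp: is_kraus_rep_def\<close>)
    finally show "r \<le> k" using As(2) by simp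
  qed
  moreover have "cp_map D (Tf D m)" unfolding cp_map_def using rep by blast
  moreover have "primitive D (Tf D m)" by (rule primitive_Tf[OF D0 m0])
  ultimately show ?thesis by blast
qed

end
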